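(* Assume $r\neq0$ and $r+s=0$. For $0\le j\le d$ let $\bar\theta_j=(d-2j)(d-2j+1)$. Then for all $0\le i,j\le d$, $$u_i(\bar\theta_j)={}_4F_3\left(\genfrac..{0pt}{}{-i,\ i-d+r,\ -j,\ j-d-\frac12}{-d,\ \frac{r-d}{2},\ \frac{r-d+1}{2}}\,\middle|\,1\right).$$
   Context: Fix an integer $d\ge0$ and $r,s\in(-1,\infty)$. Write $(x)_i=x(x+1)\cdots(x+i-1)$, $(x)_0=1$, and ${}_mF_n\left(\genfrac..{0pt}{}{a_1,\dots,a_m}{b_1,\dots,b_n}\,\middle|\,1\right)=\sum_{k\ge0}\frac{(a_1)_k\cdots(a_m)_k}{(b_1)_k\cdots(b_n)_k\,k!}$ (terminating sums here). For $0\le i\le d$ put $\theta_i=(d-i)(d-i+r+s+1)$ (these are distinct). Let $u_0,\dots,u_d$ be the unique real polynomials of degree at most $d$ such that $u_i(\theta_j)={}_3F_2\left(\genfrac..{0pt}{}{-i,-j,j-r-s-2d-1}{-s-d,-d}\,\middle|\,1\right)$ for all $0\le i,j\le d$ (the dual Hahn polynomials). *)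

theory Defs
  imports Complex_Main "HOL-Computational_Algebra.Polynomial"
begin

text \<open>In all uses below some numerator parameter is a non-positive integer -i with i <= N,
  so all terms with k > i vanish and the truncation is exactly the terminating sum.\<close>
definition hypF :: "real list \<Rightarrow> real list \<Rightarrow> nat \<Rightarrow> real" where
  "hypF as bs N = (\<Sum>k\<le>N. prod_list (map (\<lambda>a. pochhammer a k) as)
                       / (prod_list (map (\<lambda>b. pochhammer b k) bs) * fact k))"

definition dh_theta :: "nat \<Rightarrow> real \<Rightarrow> real \<Rightarrow> nat \<Rightarrow> real" where
  "dh_theta d r s i = (real d - real i) * (real d - real i + r + s + 1)"

definition dual_hahn_u :: "nat \<Rightarrow> real \<Rightarrow> real \<Rightarrow> nat \<Rightarrow> real poly" where
  "dual_hahn_u d r s i = (THE p. degree p \<le> d \<and>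
      (\<forall>j\<le>d. poly p (dh_theta d r s j) =
         hypF [- real i, - real j, real j - r - s - 2 * real d - 1]
              [- s - real d, - real d] d))"

end

theory Submission
  imports Defs
begin

lemma newton_shift:
  fixes c t :: "nat \<Rightarrow> real"
  shows "z * (\<Sum>n\<le>N. c n * (\<Prod>l<n. t l - z)) =
    (\<Sum>n\<le>N. (c n * t n - (if n = 0 then 0 else c (n - 1))) * (\<Prod>l<n. t l - z))
    - c N * (\<Prod>l<Suc N. t l - z)"
proof (induction N)
  case 0
  then show ?case by (simp add: algebra_simps)
next
  case (Suc N)
  have "z * (\<Sum>n\<le>Suc N. c n * (\<Prod>l<n. t l - z)) =
     z * (\<Sum>n\<le>N. c n * (\<Prod>l<n. t l - z)) + z * (c (Suc N) * (\<Prod>l<Suc N. t l - z))"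
    by (simp add: algebra_simps)
  also have "\<dots> = (\<Sum>n\<le>N. (c n * t n - (if n = 0 then 0 else c (n - 1))) * (\<Prod>l<n. t l - z))
    - c N * (\<Prod>l<Suc N. t l - z) + z * (c (Suc N) * (\<Prod>l<Suc N. t l - z))"
    using Suc by simp
  also have "\<dots> = (\<Sum>n\<le>Suc N. (c n * t n - (if n = 0 then 0 else c (n - 1))) * (\<Prod>l<n. t l - z))
    - c (Suc N) * (\<Prod>l<Suc (Suc N). t l - z)"
    by (simp add: algebra_simps)
  finally show ?case .
qed

lemma poch2a: "pochhammer (a::real) (Suc (Suc m)) = a * pochhammer (a+1) m * (a + 1 + real m)"
  unfolding pochhammer_rec[of a "Suc m"] pochhammer_Suc[of "a+1" m] by (simp add: algebra_simps)

lemma poch2b: "pochhammer (a::real) (Suc (Suc m)) = a * (a+1) * pochhammer (a+2) m"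
  by (simp only: pochhammer_rec) (simp add: algebra_simps)

lemma poch2c: "pochhammer (a::real) (Suc (Suc m)) = pochhammer a m * (a + real m) * (a + real m + 1)"
  by (simp only: pochhammer_Suc) (simp add: algebra_simps)

lemma poch1: "pochhammer (a::real) (Suc m) = a * pochhammer (a+1) m"
  by (simp only: pochhammer_rec)

lemma poch_prod: "pochhammer (- a) k * pochhammer (a + c) k = (\<Prod>l<k. real l * (real l + c) - a * (a + c))"
proof (induction k)
  case 0 then show ?case by simp
next
  case (Suc k)
  then show ?case by (simp add: pochhammer_Suc algebra_simps)
qed


lemma coeffL_alg:
  fixes x r dd mm nn E Dm g :: real
  assumes Dm: "Dm \<noteq> 0" and g0: "g \<noteq> 0" and gd: "g = (r - dd + (mm + 1)) * (- dd + (mm + 1)) * (mm + 2)"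
    and nn: "nn = mm + 2"
  shows "- x * E * (1 - x + mm) / (Dm * g) * (nn * (nn - 2 * dd - 1)) - - x * E / Dm
    = (x - dd) * (x - dd + r) * (- (x + 1) * - x * E / (Dm * g))
      - ((x - dd) * (x - dd + r) + x * (x + r)) * (- x * E * (1 - x + mm) / (Dm * g))
      + x * (x + r) * (E * (1 - x + mm) * (2 - x + mm) / (Dm * g))"
proof -
  have p: "(- x * (1 - x + mm)) * ((mm + 2) * ((mm + 2) - 2 * dd - 1)) - (- x) * g
    = (x - dd) * (x - dd + r) * ((-(x+1)) * (-x))
      - ((x - dd) * (x - dd + r) + x * (x + r)) * (- x * (1 - x + mm))
      + x * (x + r) * ((1 - x + mm) * (2 - x + mm))"
    unfolding gd by (simp add: algebra_simps)
  have l: "- x * E * (1 - x + mm) / (Dm * g) * (nn * (nn - 2 * dd - 1)) - - x * E / Dm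
     = E * ((- x * (1 - x + mm)) * ((mm + 2) * ((mm + 2) - 2 * dd - 1)) - (- x) * g) / (Dm * g)"
    using Dm g0 unfolding nn by (simp add: field_simps)
  have r: "(x - dd) * (x - dd + r) * (- (x + 1) * - x * E / (Dm * g))
      - ((x - dd) * (x - dd + r) + x * (x + r)) * (- x * E * (1 - x + mm) / (Dm * g))
      + x * (x + r) * (E * (1 - x + mm) * (2 - x + mm) / (Dm * g))
     = E * ((x - dd) * (x - dd + r) * ((-(x+1)) * (-x))
      - ((x - dd) * (x - dd + r) + x * (x + r)) * (- x * (1 - x + mm))
      + x * (x + r) * ((1 - x + mm) * (2 - x + mm))) / (Dm * g)"
    using Dm g0 by (simp add: field_simps)
  show ?thesis unfolding l r p ..
qed

lemma coeffR_alg: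
  fixes x r dd mm nn E E2 Dm g :: real
  assumes Dm: "Dm \<noteq> 0" and g0: "g \<noteq> 0"
    and gd: "g = (- dd + (mm + 1)) * ((r - dd) / 2 + (mm + 1)) * ((r - dd + 1) / 2 + (mm + 1)) * (mm + 2)"
    and nn: "nn = mm + 2"
  shows "4 *
     (- x * E * (1 - x + mm) *
      ((x - dd + r) * E2 * (x - dd + r + 1 + mm)) /
      (Dm * g) *
      (nn * (nn - dd - 1 / 2)) -
      - x * E * ((x - dd + r) * E2) / Dm) =
     (x - dd) * (x - dd + r) *
     (- (x + 1) * - x * E *
      (E2 * (x - dd + r + 1 + mm) * (x - dd + r + 2 + mm)) /
      (Dm * g)) -
     ((x - dd) * (x - dd + r) + x * (x + r)) *
     (- x * E * (1 - x + mm) *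
      ((x - dd + r) * E2 * (x - dd + r + 1 + mm)) /
      (Dm * g)) +
     x * (x + r) *
     (E * (1 - x + mm) * (2 - x + mm) *
      ((x - dd + r - 1) * (x - dd + r) * E2) /
      (Dm * g))"
proof -
  define b where "b = x - dd + r"
  have p: "4 * ((- x * (1 - x + mm)) * (b * (b + 1 + mm)) * (nn * (nn - dd - 1 / 2)) - (- x) * b * g)
    = (x - dd) * (x - dd + r) * ((-(x+1)) * (-x) * ((b + 1 + mm) * (b + 2 + mm)))
      - ((x - dd) * (x - dd + r) + x * (x + r)) * ((- x * (1 - x + mm)) * (b * (b + 1 + mm)))
      + x * (x + r) * (((1 - x + mm) * (2 - x + mm)) * ((b - 1) * b))"
    unfolding gd nn b_def by (simp add: field_simps)
  have l: "4 *
     (- x * E * (1 - x + mm) *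
      ((x - dd + r) * E2 * (x - dd + r + 1 + mm)) /
      (Dm * g) *
      (nn * (nn - dd - 1 / 2)) -
      - x * E * ((x - dd + r) * E2) / Dm)
     = E * E2 * (4 * ((- x * (1 - x + mm)) * (b * (b + 1 + mm)) * (nn * (nn - dd - 1 / 2)) - (- x) * b * g)) / (Dm * g)"
    using Dm g0 unfolding b_def by (simp add: field_simps)
  have r: "(x - dd) * (x - dd + r) *
     (- (x + 1) * - x * E *
      (E2 * (x - dd + r + 1 + mm) * (x - dd + r + 2 + mm)) /
      (Dm * g)) -
     ((x - dd) * (x - dd + r) + x * (x + r)) *
     (- x * E * (1 - x + mm) *
      ((x - dd + r) * E2 * (x - dd + r + 1 + mm)) /
      (Dm * g)) +
     x * (x + r) *
     (E * (1 - x + mm) * (2 - x + mm) *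
      ((x - dd + r - 1) * (x - dd + r) * E2) /
      (Dm * g))
     = E * E2 * ((x - dd) * (x - dd + r) * ((-(x+1)) * (-x) * ((b + 1 + mm) * (b + 2 + mm)))
      - ((x - dd) * (x - dd + r) + x * (x + r)) * ((- x * (1 - x + mm)) * (b * (b + 1 + mm)))
      + x * (x + r) * (((1 - x + mm) * (2 - x + mm)) * ((b - 1) * b))) / (Dm * g)"
    using Dm g0 unfolding b_def by (simp add: field_simps)
  show ?thesis unfolding l r p ..
qed

definition aL :: "nat \<Rightarrow> real \<Rightarrow> real \<Rightarrow> nat \<Rightarrow> real" where
  "aL d r x n = pochhammer (-x) n / (pochhammer (r - real d) n * pochhammer (- real d) n * fact n)"

definition Lf :: "nat \<Rightarrow> real \<Rightarrow> real \<Rightarrow> real \<Rightarrow> real" where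
  "Lf d r x lam = (\<Sum>n\<le>d. aL d r x n * (\<Prod>l<n. real l * (real l - 2 * real d - 1) - lam))"

definition bR :: "nat \<Rightarrow> real \<Rightarrow> real \<Rightarrow> nat \<Rightarrow> real" where
  "bR d r x n = pochhammer (-x) n * pochhammer (x - real d + r) n /
     (pochhammer (- real d) n * pochhammer ((r - real d) / 2) n * pochhammer ((r - real d + 1) / 2) n * fact n)"

definition Rf :: "nat \<Rightarrow> real \<Rightarrow> real \<Rightarrow> real \<Rightarrow> real" where
  "Rf d r x y = (\<Sum>n\<le>d. bR d r x n * (\<Prod>l<n. real l * (real l - real d - 1/2) - y))"

lemma DL_nz:
  assumes ni: "\<And>z::int. r \<noteq> of_int z" and "n \<le> d"
  shows "pochhammer (r - real d) n * pochhammer (- real d) n * fact n \<noteq> (0::real)"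
proof -
  have "pochhammer (r - real d) n \<noteq> 0"
  proof
    assume "pochhammer (r - real d) n = 0"
    then obtain k where "k < n" "r - real d = - real k" by (auto simp: pochhammer_eq_0_iff)
    then have "r = of_int (int d - int k)" by simp
    with ni show False by blast
  qed
  moreover have "pochhammer (- real d) n \<noteq> 0"
    using assms(2) by (auto simp: pochhammer_eq_0_iff)
  ultimately show ?thesis by simp
qed

lemma DR_nz:
  assumes ni: "\<And>z::int. r \<noteq> of_int z" and "n \<le> d"
  shows "pochhammer (- real d) n * pochhammer ((r - real d) / 2) n * pochhammer ((r - real d + 1) / 2) n * fact n \<noteq> (0::real)"
proof -
  have "pochhammer ((r - real d) / 2) n \<noteq> 0"
  proof
    assume "pochhammer ((r - real d) / 2) n = 0"
    then obtain k where "k < n" "(r - real d) / 2 = - real k" by (auto simp: pochhammer_eq_0_iff)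
    then have "r = of_int (int d - 2 * int k)" by simp
    with ni show False by blast
  qed
  moreover have "pochhammer ((r - real d + 1) / 2) n \<noteq> 0"
  proof
    assume "pochhammer ((r - real d + 1) / 2) n = 0"
    then obtain k where "k < n" "(r - real d + 1) / 2 = - real k" by (auto simp: pochhammer_eq_0_iff)
    then have "r = of_int (int d - 2 * int k - 1)" by simp
    with ni show False by blast
  qed
  moreover have "pochhammer (- real d) n \<noteq> 0"
    using assms(2) by (auto simp: pochhammer_eq_0_iff)
  ultimately show ?thesis by simp
qed

lemma aL_coeff:
  assumes ni: "\<And>z::int. r \<noteq> of_int z" and nd: "n \<le> d"
  shows "aL d r x n * (real n * (real n - 2 * real d - 1)) - (if n = 0 then 0 else aL d r x (n - 1)) =
    (x - real d) * (x - real d + r) * aL d r (x + 1) n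
    - ((x - real d) * (x - real d + r) + x * (x + r)) * aL d r x n
    + x * (x + r) * aL d r (x - 1) n"
proof (cases n)
  case 0
  then show ?thesis by (simp add: aL_def algebra_simps)
next
  case (Suc n1)
  note n1 = Suc
  show ?thesis
  proof (cases n1)
    case 0
    have "r - real d \<noteq> 0" using ni[of "int d"] by auto
    moreover have "d \<noteq> 0" using nd n1 0 by simp
    ultimately have q: "(r - real d) * (- real d) \<noteq> 0" by simp
    define D where "D = (r - real d) * (- real d)"
    have a1: "aL d r y 1 = - y / D" for y
      by (simp add: aL_def D_def)
    have a0: "aL d r x 0 = 1" by (simp add: aL_def)
    have "aL d r x 1 * (real 1 * (real 1 - 2 * real d - 1)) - aL d r x 0 =
    (x - real d) * (x - real d + r) * aL d r (x + 1) 1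
    - ((x - real d) * (x - real d + r) + x * (x + r)) * aL d r x 1
    + x * (x + r) * aL d r (x - 1) 1"
      unfolding a1 a0 using q unfolding D_def[symmetric] by (simp add: field_simps) (simp add: D_def algebra_simps)
    then show ?thesis using n1 0 by simp
  next
    case (Suc m)
    have nn: "n = Suc (Suc m)" using n1 Suc by simp
    define E where "E = pochhammer (1 - x) m"
    have e1: "pochhammer (-x) (Suc (Suc m)) = - x * E * (1 - x + real m)"
      unfolding poch2a E_def by (simp add: algebra_simps)
    have e2: "pochhammer (-(x+1)) (Suc (Suc m)) = (-(x+1)) * (-x) * E"
      unfolding poch2b E_def by (simp add: algebra_simps)
    have e3: "pochhammer (-(x-1)) (Suc (Suc m)) = E * (1 - x + real m) * (2 - x + real m)"
      unfolding poch2c E_def by (simp add: algebra_simps)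
    have e4: "pochhammer (-x) (Suc m) = - x * E"
      unfolding poch1 E_def by (simp add: algebra_simps)
    define Dm where "Dm = pochhammer (r - real d) (Suc m) * pochhammer (- real d) (Suc m) * fact (Suc m)"
    define g where "g = (r - real d + real (Suc m)) * (- real d + real (Suc m)) * real (Suc (Suc m))"
    have D2: "pochhammer (r - real d) (Suc (Suc m)) * pochhammer (- real d) (Suc (Suc m)) * fact (Suc (Suc m)) = Dm * g"
      unfolding Dm_def g_def pochhammer_Suc[of _ "Suc m"] fact_Suc[of "Suc m"] by (simp add: algebra_simps)
    have nz: "Dm * g \<noteq> 0" using DL_nz[OF ni nd, unfolded nn D2] .
    then have Dm0: "Dm \<noteq> 0" and g0: "g \<noteq> 0" by auto
    have "aL d r x n * (real n * (real n - 2 * real d - 1)) - aL d r x (n - 1) =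
      (x - real d) * (x - real d + r) * aL d r (x + 1) n
      - ((x - real d) * (x - real d + r) + x * (x + r)) * aL d r x n
      + x * (x + r) * aL d r (x - 1) n"
      unfolding aL_def nn D2 e1 e2 e3 diff_Suc_1 Dm_def[symmetric] e4
      by (rule coeffL_alg[OF Dm0 g0]) (simp_all add: g_def algebra_simps)
    then show ?thesis using nn by simp
  qed
qed


lemma bR_coeff:
  assumes ni: "\<And>z::int. r \<noteq> of_int z" and nd: "n \<le> d"
  shows "4 * (bR d r x n * (real n * (real n - real d - 1/2)) - (if n = 0 then 0 else bR d r x (n - 1))) =
    (x - real d) * (x - real d + r) * bR d r (x + 1) n
    - ((x - real d) * (x - real d + r) + x * (x + r)) * bR d r x n
    + x * (x + r) * bR d r (x - 1) n"
proof (cases n)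
  case 0
  then show ?thesis by (simp add: bR_def algebra_simps)
next
  case (Suc n1)
  note n1 = Suc
  show ?thesis
  proof (cases n1)
    case 0
    define D where "D = (- real d) * (r - real d) * (r - real d + 1)"
    have q: "D \<noteq> 0" using DR_nz[OF ni nd] n1 0 by (simp add: D_def)
    have a1: "bR d r y 1 = 4 * (- y * (y - real d + r)) / D" for y
      by (simp add: bR_def D_def)
    have a0: "bR d r x 0 = 1" by (simp add: bR_def)
    have "4 * (bR d r x 1 * (real 1 * (real 1 - real d - 1/2)) - bR d r x 0) =
    (x - real d) * (x - real d + r) * bR d r (x + 1) 1
    - ((x - real d) * (x - real d + r) + x * (x + r)) * bR d r x 1
    + x * (x + r) * bR d r (x - 1) 1"
      unfolding a1 a0 using q by (simp add: field_simps) (simp add: D_def algebra_simps)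
    then show ?thesis using n1 0 by simp
  next
    case (Suc m)
    have nn: "n = Suc (Suc m)" using n1 Suc by simp
    define E where "E = pochhammer (1 - x) m"
    define E2 where "E2 = pochhammer (x - real d + r + 1) m"
    have e1: "pochhammer (-x) (Suc (Suc m)) = - x * E * (1 - x + real m)"
      unfolding poch2a E_def by (simp add: algebra_simps)
    have e2: "pochhammer (-(x+1)) (Suc (Suc m)) = (-(x+1)) * (-x) * E"
      unfolding poch2b E_def by (simp add: algebra_simps)
    have e3: "pochhammer (-(x-1)) (Suc (Suc m)) = E * (1 - x + real m) * (2 - x + real m)"
      unfolding poch2c E_def by (simp add: algebra_simps)
    have e4: "pochhammer (-x) (Suc m) = - x * E"
      unfolding poch1 E_def by (simp add: algebra_simps)
    have f1: "pochhammer (x - real d + r) (Suc (Suc m)) = (x - real d + r) * E2 * (x - real d + r + 1 + real m)"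
      unfolding poch2a E2_def by (simp add: algebra_simps)
    have f2: "pochhammer (x + 1 - real d + r) (Suc (Suc m)) = E2 * (x - real d + r + 1 + real m) * (x - real d + r + 2 + real m)"
      unfolding poch2c E2_def by (simp add: algebra_simps)
    have f3: "pochhammer (x - 1 - real d + r) (Suc (Suc m)) = (x - real d + r - 1) * (x - real d + r) * E2"
      unfolding poch2b E2_def by (simp add: algebra_simps)
    have f4: "pochhammer (x - real d + r) (Suc m) = (x - real d + r) * E2"
      unfolding poch1 E2_def by (simp add: algebra_simps)
    define Dm where "Dm = pochhammer (- real d) (Suc m) * pochhammer ((r - real d) / 2) (Suc m) * pochhammer ((r - real d + 1) / 2) (Suc m) * fact (Suc m)"
    define g where "g = (- real d + real (Suc m)) * ((r - real d) / 2 + real (Suc m)) * ((r - real d + 1) / 2 + real (Suc m)) * real (Suc (Suc m))"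
    have D2: "pochhammer (- real d) (Suc (Suc m)) * pochhammer ((r - real d) / 2) (Suc (Suc m)) * pochhammer ((r - real d + 1) / 2) (Suc (Suc m)) * fact (Suc (Suc m)) = Dm * g"
      unfolding Dm_def g_def pochhammer_Suc[of _ "Suc m"] fact_Suc[of "Suc m"] by (simp only: mult_ac)
    have nz: "Dm * g \<noteq> 0" using DR_nz[OF ni nd, unfolded nn D2] .
    then have Dm0: "Dm \<noteq> 0" and g0: "g \<noteq> 0" by auto
    have "4 * (bR d r x n * (real n * (real n - real d - 1/2)) - bR d r x (n - 1)) =
      (x - real d) * (x - real d + r) * bR d r (x + 1) n
      - ((x - real d) * (x - real d + r) + x * (x + r)) * bR d r x n
      + x * (x + r) * bR d r (x - 1) n"
      unfolding bR_def nn D2 e1 e2 e3 diff_Suc_1 Dm_def[symmetric] e4 f1 f2 f3 f4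
      by (rule coeffR_alg[OF Dm0 g0]) (simp_all add: g_def algebra_simps)
    then show ?thesis using nn by simp
  qed
qed


lemma Lf_rec:
  assumes ni: "\<And>z::int. r \<noteq> of_int z" and x0: "pochhammer (-x) d = 0"
  shows "lam * Lf d r x lam = (x - real d) * (x - real d + r) * Lf d r (x + 1) lam
    - ((x - real d) * (x - real d + r) + x * (x + r)) * Lf d r x lam
    + x * (x + r) * Lf d r (x - 1) lam"
proof -
  define A where "A = (x - real d) * (x - real d + r)"
  define C where "C = x * (x + r)"
  define ph where "ph = (\<lambda>n. \<Prod>l<n. real l * (real l - 2 * real d - 1) - lam)"
  have "lam * Lf d r x lam = (\<Sum>n\<le>d. (aL d r x n * (real n * (real n - 2 * real d - 1)) - (if n = 0 then 0 else aL d r x (n - 1))) * ph n)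
    - aL d r x d * ph (Suc d)"
    unfolding Lf_def ph_def by (rule newton_shift)
  also have "aL d r x d = 0" using x0 by (simp add: aL_def)
  also have "(\<Sum>n\<le>d. (aL d r x n * (real n * (real n - 2 * real d - 1)) - (if n = 0 then 0 else aL d r x (n - 1))) * ph n)
     = (\<Sum>n\<le>d. A * (aL d r (x + 1) n * ph n) - (A + C) * (aL d r x n * ph n) + C * (aL d r (x - 1) n * ph n))"
  proof (rule sum.cong)
    fix n assume "n \<in> {..d}"
    then have "n \<le> d" by simp
    from aL_coeff[OF ni this, of x] have eq: "aL d r x n * (real n * (real n - 2 * real d - 1)) - (if n = 0 then 0 else aL d r x (n - 1))
      = A * aL d r (x + 1) n - (A + C) * aL d r x n + C * aL d r (x - 1) n"
      unfolding A_def C_def .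
    show "(aL d r x n * (real n * (real n - 2 * real d - 1)) - (if n = 0 then 0 else aL d r x (n - 1))) * ph n
      = A * (aL d r (x + 1) n * ph n) - (A + C) * (aL d r x n * ph n) + C * (aL d r (x - 1) n * ph n)"
      unfolding eq by (simp add: algebra_simps)
  qed simp
  also have "\<dots> = A * Lf d r (x + 1) lam - (A + C) * Lf d r x lam + C * Lf d r (x - 1) lam"
    unfolding Lf_def ph_def by (simp add: sum_distrib_left sum.distrib sum_subtractf)
  finally show ?thesis unfolding A_def C_def by simp
qed

lemma Rf_rec:
  assumes ni: "\<And>z::int. r \<noteq> of_int z" and x0: "pochhammer (-x) d = 0"
  shows "4 * y * Rf d r x y = (x - real d) * (x - real d + r) * Rf d r (x + 1) y
    - ((x - real d) * (x - real d + r) + x * (x + r)) * Rf d r x y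
    + x * (x + r) * Rf d r (x - 1) y"
proof -
  define A where "A = (x - real d) * (x - real d + r)"
  define C where "C = x * (x + r)"
  define ph where "ph = (\<lambda>n. \<Prod>l<n. real l * (real l - real d - 1/2) - y)"
  have "y * Rf d r x y = (\<Sum>n\<le>d. (bR d r x n * (real n * (real n - real d - 1/2)) - (if n = 0 then 0 else bR d r x (n - 1))) * ph n)
    - bR d r x d * ph (Suc d)"
    unfolding Rf_def ph_def by (rule newton_shift)
  also have "bR d r x d = 0" using x0 by (simp add: bR_def)
  finally have "4 * y * Rf d r x y = 4 * (\<Sum>n\<le>d. (bR d r x n * (real n * (real n - real d - 1/2)) - (if n = 0 then 0 else bR d r x (n - 1))) * ph n)"
    by simp
  also have "\<dots> = (\<Sum>n\<le>d. 4 * ((bR d r x n * (real n * (real n - real d - 1/2)) - (if n = 0 then 0 else bR d r x (n - 1))) * ph n))"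
    by (simp add: sum_distrib_left)
  also have "\<dots> = (\<Sum>n\<le>d. A * (bR d r (x + 1) n * ph n) - (A + C) * (bR d r x n * ph n) + C * (bR d r (x - 1) n * ph n))"
  proof (rule sum.cong)
    fix n assume "n \<in> {..d}"
    then have "n \<le> d" by simp
    from bR_coeff[OF ni this, of x] have eq: "4 * (bR d r x n * (real n * (real n - real d - 1/2)) - (if n = 0 then 0 else bR d r x (n - 1)))
      = A * bR d r (x + 1) n - (A + C) * bR d r x n + C * bR d r (x - 1) n"
      unfolding A_def C_def .
    show "4 * ((bR d r x n * (real n * (real n - real d - 1/2)) - (if n = 0 then 0 else bR d r x (n - 1))) * ph n)
      = A * (bR d r (x + 1) n * ph n) - (A + C) * (bR d r x n * ph n) + C * (bR d r (x - 1) n * ph n)"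
    proof -
      have "4 * ((bR d r x n * (real n * (real n - real d - 1/2)) - (if n = 0 then 0 else bR d r x (n - 1))) * ph n)
        = (4 * (bR d r x n * (real n * (real n - real d - 1/2)) - (if n = 0 then 0 else bR d r x (n - 1)))) * ph n"
        by (simp only: mult.assoc)
      also have "\<dots> = (A * bR d r (x + 1) n - (A + C) * bR d r x n + C * bR d r (x - 1) n) * ph n"
        unfolding eq ..
      finally show ?thesis by (simp add: algebra_simps)
    qed
  qed simp
  also have "\<dots> = A * Rf d r (x + 1) y - (A + C) * Rf d r x y + C * Rf d r (x - 1) y"
    unfolding Rf_def ph_def by (simp add: sum_distrib_left sum.distrib sum_subtractf)
  finally show ?thesis unfolding A_def C_def by simp
qed


lemma Lf_0: "Lf d r 0 lam = 1"
proof -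
  have "Lf d r 0 lam = (\<Sum>n\<le>d. if n = 0 then 1 else 0)"
    unfolding Lf_def aL_def by (rule sum.cong) (auto simp: pochhammer_0_left)
  then show ?thesis by simp
qed

lemma Rf_0: "Rf d r 0 y = 1"
proof -
  have "Rf d r 0 y = (\<Sum>n\<le>d. if n = 0 then 1 else 0)"
    unfolding Rf_def bR_def by (rule sum.cong) (auto simp: pochhammer_0_left)
  then show ?thesis by simp
qed

lemma LR_eq:
  assumes ni: "\<And>z::int. r \<noteq> of_int z" and "i \<le> d"
  shows "Lf d r (real i) (4 * y) = Rf d r (real i) y"
  using assms(2)
proof (induction i rule: less_induct)
  case (less i)
  show ?case
  proof (cases i)
    case 0
    then show ?thesis by (simp add: Lf_0 Rf_0)
  next
    case (Suc k)
    have kd: "k < d" using less.prems Suc by simp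
    define x where "x = real k"
    define A where "A = (x - real d) * (x - real d + r)"
    define C where "C = x * (x + r)"
    have x0: "pochhammer (-x) d = 0" unfolding x_def using kd by (simp add: pochhammer_of_nat_eq_0_lemma)
    have A0: "A \<noteq> 0"
    proof
      assume "A = 0"
      then have "x - real d = 0 \<or> x - real d + r = 0" unfolding A_def by simp
      moreover have "x - real d \<noteq> 0" using kd unfolding x_def by simp
      moreover have "x - real d + r \<noteq> 0"
      proof
        assume "x - real d + r = 0"
        then have "r = of_int (int d - int k)" unfolding x_def by simp
        with ni show False by blast
      qed
      ultimately show False by blast
    qed
    have Lk: "Lf d r x (4 * y) = Rf d r x y" unfolding x_def using less.IH[of k] Suc kd by simp
    have Lkm: "C * Lf d r (x - 1) (4 * y) = C * Rf d r (x - 1) y"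
    proof (cases k)
      case 0 then show ?thesis unfolding C_def x_def by simp
    next
      case (Suc k')
      have "Lf d r (real k') (4 * y) = Rf d r (real k') y" using less.IH[of k'] Suc kd \<open>i = Suc k\<close> by simp
      moreover have "x - 1 = real k'" unfolding x_def using Suc by simp
      ultimately show ?thesis by simp
    qed
    have L1: "4 * y * Lf d r x (4 * y) = A * Lf d r (x + 1) (4 * y) - (A + C) * Lf d r x (4 * y) + C * Lf d r (x - 1) (4 * y)"
      using Lf_rec[OF ni x0, of "4 * y"] unfolding A_def C_def by simp
    have R1: "4 * y * Rf d r x y = A * Rf d r (x + 1) y - (A + C) * Rf d r x y + C * Rf d r (x - 1) y"
      using Rf_rec[OF ni x0, of y] unfolding A_def C_def by simp
    have "A * Lf d r (x + 1) (4 * y) = A * Rf d r (x + 1) y"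
      using L1 R1 unfolding Lk Lkm by linarith
    then have "Lf d r (x + 1) (4 * y) = Rf d r (x + 1) y" using A0 by simp
    then show ?thesis unfolding x_def using Suc by (simp add: add.commute)
  qed
qed


lemma Lf_hyp:
  "Lf d r (real i) (real j * (real j - 2 * real d - 1)) =
   hypF [- real i, - real j, real j + (- 2 * real d - 1)] [r - real d, - real d] d"
  unfolding Lf_def hypF_def
proof (rule sum.cong)
  fix k assume "k \<in> {..d}"
  have pp: "pochhammer (- real j) k * pochhammer (real j + (- 2 * real d - 1)) k =
     (\<Prod>l<k. real l * (real l - 2 * real d - 1) - real j * (real j - 2 * real d - 1))"
    using poch_prod[of "real j" k "- 2 * real d - 1"] by (simp add: algebra_simps)
  show "aL d r (real i) k * (\<Prod>l<k. real l * (real l - 2 * real d - 1) - real j * (real j - 2 * real d - 1)) =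
    prod_list (map (\<lambda>a. pochhammer a k) [- real i, - real j, real j + (- 2 * real d - 1)]) /
    (prod_list (map (\<lambda>b. pochhammer b k) [r - real d, - real d]) * fact k)"
    unfolding pp[symmetric] aL_def by simp
qed simp

lemma Rf_hyp:
  "Rf d r (real i) (real j * (real j - real d - 1/2)) =
   hypF [- real i, real i - real d + r, - real j, real j - real d - 1/2]
              [- real d, (r - real d) / 2, (r - real d + 1) / 2] d"
  unfolding Rf_def hypF_def
proof (rule sum.cong)
  fix k assume "k \<in> {..d}"
  have pp: "pochhammer (- real j) k * pochhammer (real j - real d - 1/2) k =
     (\<Prod>l<k. real l * (real l - real d - 1/2) - real j * (real j - real d - 1/2))"
    using poch_prod[of "real j" k "- real d - 1/2"] by (simp add: algebra_simps)
  show "bR d r (real i) k * (\<Prod>l<k. real l * (real l - real d - 1/2) - real j * (real j - real d - 1/2)) =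
    prod_list (map (\<lambda>a. pochhammer a k) [- real i, real i - real d + r, - real j, real j - real d - 1/2]) /
    (prod_list (map (\<lambda>b. pochhammer b k) [- real d, (r - real d) / 2, (r - real d + 1) / 2]) * fact k)"
    unfolding pp[symmetric] bR_def by simp
qed simp




definition Pd :: "nat \<Rightarrow> real \<Rightarrow> nat \<Rightarrow> real poly" where
  "Pd d r i = (\<Sum>n\<le>d. smult (aL d r (real i) n)
      (\<Prod>l<n. [: real l * (real l - 2 * real d - 1) + real d * (real d + 1), -1 :]))"

lemma Pd_eval: "poly (Pd d r i) t = Lf d r (real i) (t - real d * (real d + 1))"
  unfolding Pd_def Lf_def poly_sum
proof (rule sum.cong)
  fix n assume "n \<in> {..d}"
  show "poly (smult (aL d r (real i) n) (\<Prod>l<n. [: real l * (real l - 2 * real d - 1) + real d * (real d + 1), -1 :])) t =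
    aL d r (real i) n * (\<Prod>l<n. real l * (real l - 2 * real d - 1) - (t - real d * (real d + 1)))"
    by (simp add: poly_prod algebra_simps)
qed simp

lemma Pd_degree: "degree (Pd d r i) \<le> d"
  unfolding Pd_def
proof (rule degree_sum_le)
  fix n assume "n \<in> {..d}"
  then have nd: "n \<le> d" by simp
  have "degree (\<Prod>l<n. [: real l * (real l - 2 * real d - 1) + real d * (real d + 1), -1 :])
     \<le> (\<Sum>l<n. (degree \<circ> (\<lambda>l. [: real l * (real l - 2 * real d - 1) + real d * (real d + 1), -1 :])) l)"
    by (rule degree_prod_sum_le) simp
  also have "\<dots> = n" by simp
  finally show "degree (smult (aL d r (real i) n) (\<Prod>l<n. [: real l * (real l - 2 * real d - 1) + real d * (real d + 1), -1 :])) \<le> d"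
    using degree_smult_le[of "aL d r (real i) n" "\<Prod>l<n. [: real l * (real l - 2 * real d - 1) + real d * (real d + 1), -1 :]"] nd
    by linarith
qed simp

theorem lemma3p4:
  fixes d i j :: nat and r s :: real
  assumes "r > -1" and "s > -1" and "r \<noteq> 0" and "r + s = 0"
    and "i \<le> d" and "j \<le> d"
  shows "poly (dual_hahn_u d r s i) ((real d - 2 * real j) * (real d - 2 * real j + 1)) =
         hypF [- real i, real i - real d + r, - real j, real j - real d - 1/2]
              [- real d, (r - real d) / 2, (r - real d + 1) / 2] d"
proof -
  have ni: "r \<noteq> of_int z" for z :: int
  proof
    assume rz: "r = of_int z"
    have "of_int z > (-1::real)" "of_int z < (1::real)" using assms(1,2,4) rz by auto
    then have "z = 0" by linarith
    with rz assms(3) show False by simp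
  qed
  have th: "dh_theta d r s k = (real d - real k) * (real d - real k + 1)" for k
  proof -
    have "s = - r" using assms(4) by simp
    then show ?thesis unfolding dh_theta_def by (simp add: algebra_simps)
  qed
  have interp: "poly (Pd d r i) (dh_theta d r s k) =
         hypF [- real i, - real k, real k - r - s - 2 * real d - 1] [- s - real d, - real d] d" for k
  proof -
    have "dh_theta d r s k - real d * (real d + 1) = real k * (real k - 2 * real d - 1)"
      unfolding th by (simp add: algebra_simps)
    moreover have "real k - r - s - 2 * real d - 1 = real k + (- 2 * real d - 1)"
      using assms(4) by simp
    moreover have "- s - real d = r - real d" using assms(4) by simp
    ultimately show ?thesis unfolding Pd_eval by (simp only: Lf_hyp)
  qed
  have inj: "inj_on (dh_theta d r s) {..d}"
  proof (rule inj_onI)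
    fix a b assume a: "a \<in> {..d}" and b: "b \<in> {..d}" and e: "dh_theta d r s a = dh_theta d r s b"
    define u where "u = real d - real a"
    define v where "v = real d - real b"
    have u0: "u \<ge> 0" "v \<ge> 0" using a b unfolding u_def v_def by auto
    have "u * (u + 1) = v * (v + 1)" using e unfolding th u_def v_def .
    then have "(u - v) * (u + v + 1) = 0" by (simp add: algebra_simps)
    moreover have "u + v + 1 \<noteq> 0" using u0 by simp
    ultimately have "u = v" by simp
    then show "a = b" unfolding u_def v_def by simp
  qed
  have card: "card (dh_theta d r s ` {..d}) = Suc d"
    using card_image[OF inj] by simp
  have uP: "dual_hahn_u d r s i = Pd d r i"
    unfolding dual_hahn_u_def
  proof (rule the_equality)
    show "degree (Pd d r i) \<le> d \<and> (\<forall>j\<le>d. poly (Pd d r i) (dh_theta d r s j) =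
         hypF [- real i, - real j, real j - r - s - 2 * real d - 1] [- s - real d, - real d] d)"
      using Pd_degree interp by blast
  next
    fix p assume p: "degree p \<le> d \<and> (\<forall>j\<le>d. poly p (dh_theta d r s j) =
         hypF [- real i, - real j, real j - r - s - 2 * real d - 1] [- s - real d, - real d] d)"
    show "p = Pd d r i"
    proof (rule poly_eqI_degree[of "dh_theta d r s ` {..d}"])
      fix t assume "t \<in> dh_theta d r s ` {..d}"
      then obtain k where "k \<le> d" "t = dh_theta d r s k" by auto
      then show "poly p t = poly (Pd d r i) t" using p interp by simp
    next
      show "degree p < card (dh_theta d r s ` {..d})" using p card by simp
    next
      show "degree (Pd d r i) < card (dh_theta d r s ` {..d})" using Pd_degree[of d r i] card by simp
    qed
  qed
  have "(real d - 2 * real j) * (real d - 2 * real j + 1) - real d * (real d + 1)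
     = 4 * (real j * (real j - real d - 1/2))"
    by (simp add: algebra_simps)
  then have "poly (dual_hahn_u d r s i) ((real d - 2 * real j) * (real d - 2 * real j + 1))
      = Lf d r (real i) (4 * (real j * (real j - real d - 1/2)))"
    unfolding uP Pd_eval by simp
  also have "\<dots> = Rf d r (real i) (real j * (real j - real d - 1/2))"
    using LR_eq[OF ni assms(5)] by blast
  also have "\<dots> = hypF [- real i, real i - real d + r, - real j, real j - real d - 1/2]
              [- real d, (r - real d) / 2, (r - real d + 1) / 2] d"
    by (rule Rf_hyp)
  finally show ?thesis .
qed

end
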